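(* Let $p>3$ be a prime and $t\in\mathbb{Z}_p$. If $1\le k\le p-1$ is an integer, then $$\binom{pt+k-1}{p-1}\binom{-pt-k-1}{p-1}\equiv\frac{p^2t(t+1)}{k^2}\left(1+2pH_k-\frac{p}{k}-\frac{2pt}{k}\right)\pmod{p^4}.$$ If $1\le k\le(p-1)/2$, then $$\binom{pt+k-1}{\frac{p-1}{2}}\binom{-pt-k-1}{\frac{p-1}{2}}\equiv\frac{pt}{k}\left(1-\frac{pt}{k}+2pH_{2k}-pH_k\right)\pmod{p^3}.$$
   Context: $\mathbb{Z}_p$ is the ring of $p$-adic integers; $\binom{x}{m}=x(x-1)\cdots(x-m+1)/m!$ for $x\in\mathbb{Z}_p$. $H_n=\sum_{j=1}^n 1/j$. Congruences modulo $p^m$ mean the difference lies in $p^m\mathbb{Z}_p$. *)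

theory Defs
  imports Complex_Main "HOL-Computational_Algebra.Primes"
begin

text \<open>p-adic integers, represented as coherent sequences of residues:
  t n is the residue of t modulo p^n, in {0..<p^n}, and t (n+1) reduces to t n.\<close>
definition Zp :: "int \<Rightarrow> (nat \<Rightarrow> int) set" where
  "Zp p = {t. \<forall>n. 0 \<le> t n \<and> t n < p ^ n \<and> t (Suc n) mod p ^ n = t n}"

definition qcong :: "int \<Rightarrow> nat \<Rightarrow> rat \<Rightarrow> rat \<Rightarrow> bool" where
  "qcong p m x y \<longleftrightarrow> (\<exists>a b::int. \<not> p dvd b \<and> x - y = of_int (p ^ m) * of_int a / of_int b)"

text \<open>Congruence modulo p^m of two expressions F, G (polynomials in t with p-integral
  rational coefficients) evaluated at the p-adic integer t: the values at the integer
  approximations t n (n \<ge> m), each congruent to t modulo p^m, are congruent mod p^m.\<close>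
definition padic_cong :: "int \<Rightarrow> nat \<Rightarrow> (rat \<Rightarrow> rat) \<Rightarrow> (rat \<Rightarrow> rat) \<Rightarrow> (nat \<Rightarrow> int) \<Rightarrow> bool" where
  "padic_cong p m F G t \<longleftrightarrow> (\<forall>n\<ge>m. qcong p m (F (of_int (t n))) (G (of_int (t n))))"

definition harm :: "nat \<Rightarrow> rat" where
  "harm n = (\<Sum>j=1..n. 1 / of_nat j)"

end

theory Submission
  imports Defs
begin


definition Rp :: "int \<Rightarrow> rat set" where
  "Rp p = {q. \<exists>a b. \<not> p dvd b \<and> q = of_int a / of_int b}"

lemma Rp_int: assumes "prime p" shows "of_int a \<in> Rp p"
proof -
  have "\<not> p dvd 1" by (metis not_prime_unit assms)
  hence "\<not> p dvd 1 \<and> (of_int a::rat) = of_int a / of_int 1" by simp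
  thus ?thesis unfolding Rp_def by blast
qed

lemma Rp_nat: assumes "prime p" shows "of_nat a \<in> Rp p"
  using Rp_int[OF assms, of "int a"] by simp

lemma Rp_numeral: assumes "prime p" shows "numeral n \<in> Rp p"
  using Rp_int[OF assms, of "numeral n"] by simp

lemma Rp_0: assumes "prime p" shows "0 \<in> Rp p" using Rp_int[OF assms, of 0] by simp
lemma Rp_1: assumes "prime p" shows "1 \<in> Rp p" using Rp_int[OF assms, of 1] by simp

lemma Rp_inv: assumes "\<not> p dvd b" shows "1 / of_int b \<in> Rp p"
proof -
  have "\<not> p dvd b \<and> (1 / of_int b::rat) = of_int 1 / of_int b" using assms by simp
  thus ?thesis unfolding Rp_def by blast
qed

lemma Rp_mult: assumes "prime p" "x \<in> Rp p" "y \<in> Rp p" shows "x * y \<in> Rp p"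
proof -
  obtain a b where ab: "\<not> p dvd b" "x = of_int a / of_int b" using assms(2) unfolding Rp_def by auto
  obtain c d where cd: "\<not> p dvd d" "y = of_int c / of_int d" using assms(3) unfolding Rp_def by auto
  have "\<not> p dvd b * d" using ab cd assms(1) by (simp add: prime_dvd_mult_iff)
  moreover have "x * y = of_int (a*c) / of_int (b*d)" using ab cd by simp
  ultimately show ?thesis unfolding Rp_def by blast
qed

lemma Rp_add: assumes "prime p" "x \<in> Rp p" "y \<in> Rp p" shows "x + y \<in> Rp p"
proof -
  obtain a b where ab: "\<not> p dvd b" "x = of_int a / of_int b" using assms(2) unfolding Rp_def by auto
  obtain c d where cd: "\<not> p dvd d" "y = of_int c / of_int d" using assms(3) unfolding Rp_def by auto
  have nd: "\<not> p dvd b * d" using ab cd assms(1) by (simp add: prime_dvd_mult_iff)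
  have "b \<noteq> 0" "d \<noteq> 0" using ab cd by auto
  hence "x + y = of_int (a*d + c*b) / of_int (b*d)" using ab cd by (simp add: field_simps)
  with nd show ?thesis unfolding Rp_def by blast
qed

lemma Rp_uminus: assumes "x \<in> Rp p" shows "- x \<in> Rp p"
proof -
  obtain a b where ab: "\<not> p dvd b" "x = of_int a / of_int b" using assms unfolding Rp_def by auto
  hence "-x = of_int (-a) / of_int b" by simp
  with ab show ?thesis unfolding Rp_def by blast
qed

lemma Rp_diff: assumes "prime p" "x \<in> Rp p" "y \<in> Rp p" shows "x - y \<in> Rp p"
  using Rp_add[OF assms(1,2) Rp_uminus[OF assms(3)]] by simp

lemma Rp_div: assumes "prime p" "x \<in> Rp p" "\<not> p dvd b" shows "x / of_int b \<in> Rp p"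
  using Rp_mult[OF assms(1,2) Rp_inv[OF assms(3)]] by simp

lemma Rp_div_nat: assumes "prime p" "x \<in> Rp p" "0 < b" "b < p" shows "x / of_nat (nat b) \<in> Rp p"
proof -
  have "\<not> p dvd b" using assms by (meson zdvd_not_zless)
  thus ?thesis using Rp_div[OF assms(1,2)] assms by simp
qed

lemma Rp_sum: assumes "prime p" "\<And>i. i \<in> I \<Longrightarrow> f i \<in> Rp p" shows "sum f I \<in> Rp p"
  using assms(2) by (induction I rule: infinite_finite_induct) (auto intro: Rp_add[OF assms(1)] Rp_0[OF assms(1)])

lemma Rp_prod: assumes "prime p" "\<And>i. i \<in> I \<Longrightarrow> f i \<in> Rp p" shows "prod f I \<in> Rp p"
  using assms(2) by (induction I rule: infinite_finite_induct) (auto intro: Rp_mult[OF assms(1)] Rp_1[OF assms(1)])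

lemma qcong_Rp: "qcong p m x y \<longleftrightarrow> (\<exists>r\<in>Rp p. x - y = of_int p ^ m * r)"
proof
  assume "qcong p m x y"
  then obtain a b where "\<not> p dvd b" "x - y = of_int (p ^ m) * of_int a / of_int b" unfolding qcong_def by blast
  thus "\<exists>r\<in>Rp p. x - y = of_int p ^ m * r" unfolding Rp_def
    by (intro bexI[of _ "of_int a / of_int b"]) auto
next
  assume "\<exists>r\<in>Rp p. x - y = of_int p ^ m * r"
  then obtain a b where "\<not> p dvd b" "x - y = of_int p ^ m * (of_int a / of_int b)" unfolding Rp_def by blast
  thus "qcong p m x y" unfolding qcong_def by (intro exI[of _ a] exI[of _ b]) auto
qed

lemma prod_one_plus:
  assumes "prime p" "finite I" "\<And>i. i \<in> I \<Longrightarrow> a i \<in> Rp p"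
  shows "\<exists>r\<in>Rp p. (\<Prod>i\<in>I. 1 + of_int p * a i) = 1 + of_int p * (\<Sum>i\<in>I. a i) + of_int p ^ 2 * r"
  using assms(2,3)
proof (induction I rule: finite_induct)
  case empty thus ?case using Rp_0[OF assms(1)] by auto
next
  case (insert j I)
  then obtain r where r: "r \<in> Rp p" "(\<Prod>i\<in>I. 1 + of_int p * a i) = 1 + of_int p * (\<Sum>i\<in>I. a i) + of_int p ^ 2 * r" by auto
  define S where "S = (\<Sum>i\<in>I. a i)"
  have S: "S \<in> Rp p" unfolding S_def by (rule Rp_sum[OF assms(1)]) (use insert.prems in auto)
  have aj: "a j \<in> Rp p" using insert by auto
  let ?r = "a j * S + r + of_int p * a j * r"
  have "?r \<in> Rp p" using S aj r(1) assms(1)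
    by (intro Rp_add Rp_mult Rp_int) auto
  moreover have "(\<Prod>i\<in>insert j I. 1 + of_int p * a i) = 1 + of_int p * (\<Sum>i\<in>insert j I. a i) + of_int p ^ 2 * ?r"
    using insert(1,2) r(2) by (simp add: S_def algebra_simps power2_eq_square)
  ultimately show ?case by blast
qed



lemma prod_split: "(\<Prod>i<a+b. f i) = (\<Prod>i<a. f i) * (\<Prod>i<b. f (a+i))" for f :: "nat \<Rightarrow> 'a::comm_monoid_mult"
  by (induction b) (auto simp: mult.assoc)

lemma sum_split: "(\<Sum>i<a+b. f i) = (\<Sum>i<a. f i) + (\<Sum>i<b. f (a+i))" for f :: "nat \<Rightarrow> 'a::comm_monoid_add"
  by (induction b) (auto simp: add.assoc)

lemma prod_rev: "(\<Prod>i<K. c - of_nat i) = (\<Prod>i<K. c - of_nat K + 1 + of_nat i)" for c :: rat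
proof -
  have "(\<Prod>i<K. c - of_nat i) = (\<Prod>i<K. (\<lambda>j. c - of_nat j) (K - Suc i))"
    by (rule prod.nat_diff_reindex[symmetric])
  also have "\<dots> = (\<Prod>i<K. c - of_nat K + 1 + of_nat i)"
    by (rule prod.cong) (auto simp: of_nat_diff)
  finally show ?thesis .
qed

lemma fact_split: "(fact (a + b) :: rat) = (\<Prod>i<a. of_nat (Suc i)) * (\<Prod>i<b. of_nat (Suc (a + i)))"
proof -
  have "(fact (a+b) :: rat) = (\<Prod>i<a+b. of_nat (Suc i))"
    by (simp add: fact_prod_Suc atLeast0LessThan of_nat_prod)
  thus ?thesis by (simp add: prod_split)
qed

lemma gA1:
  fixes y :: rat
  assumes "1 \<le> k" "k \<le> n"
  shows "(y + of_nat k - 1) gchoose n = y / of_nat k * (\<Prod>i<k-1. 1 + y / of_nat (Suc i))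
          * (\<Prod>i<n-k. 1 + (y - of_nat (Suc n)) / of_nat (Suc (k+i)))"
proof -
  obtain k' where k: "k = Suc k'" using assms by (cases k) auto
  define M where "M = n - k"
  have n: "n = k + M" using assms unfolding M_def by simp
  define a where "a = y + of_nat k - 1"
  have num: "(\<Prod>i<n. a - of_nat i) = (y * (\<Prod>i<k'. y + of_nat (Suc i))) * (\<Prod>i<M. y - of_nat M + of_nat i)"
  proof -
    have "(\<Prod>i<n. a - of_nat i) = (\<Prod>i<k. a - of_nat i) * (\<Prod>i<M. (a - of_nat k) - of_nat i)"
      unfolding n prod_split by (simp add: algebra_simps)
    also have "(\<Prod>i<k. a - of_nat i) = (\<Prod>i<Suc k'. y + of_nat i)"
      unfolding prod_rev by (simp add: a_def k)
    also have "\<dots> = y * (\<Prod>i<k'. y + of_nat (Suc i))"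
      unfolding prod.lessThan_Suc_shift by simp
    also have "(\<Prod>i<M. (a - of_nat k) - of_nat i) = (\<Prod>i<M. y - of_nat M + of_nat i)"
      unfolding prod_rev by (simp add: a_def)
    finally show ?thesis .
  qed
  have fn: "(fact n :: rat) = of_nat k * (\<Prod>i<k'. of_nat (Suc i)) * (\<Prod>i<M. of_nat (Suc (k + i)))"
    unfolding n fact_split by (simp add: k)
  have "a gchoose n = (\<Prod>i<n. a - of_nat i) / fact n"
    by (simp add: gbinomial_prod_rev atLeast0LessThan)
  also have "\<dots> = y / of_nat k * ((\<Prod>i<k'. y + of_nat (Suc i)) / (\<Prod>i<k'. of_nat (Suc i)))
       * ((\<Prod>i<M. y - of_nat M + of_nat i) / (\<Prod>i<M. of_nat (Suc (k + i))))"
    unfolding num fn by simp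
  also have "(\<Prod>i<k'. y + of_nat (Suc i)) / (\<Prod>i<k'. of_nat (Suc i)) = (\<Prod>i<k'. 1 + y / of_nat (Suc i))"
    unfolding prod_dividef[symmetric] by (rule prod.cong) (auto simp: field_simps)
  also have "(\<Prod>i<M. y - of_nat M + of_nat i) / (\<Prod>i<M. of_nat (Suc (k + i))) =
      (\<Prod>i<M. 1 + (y - of_nat (Suc n)) / of_nat (Suc (k+i)))"
    unfolding prod_dividef[symmetric] by (rule prod.cong) (auto simp: field_simps n)
  finally show ?thesis unfolding a_def M_def k by simp
qed

lemma gA2:
  fixes y :: rat
  assumes "1 \<le> k" "k \<le> n"
  shows "(y + of_nat k + of_nat n) gchoose n = (y + of_nat (Suc n)) / of_nat k
          * (\<Prod>i<k-1. 1 + (y + of_nat (Suc n)) / of_nat (Suc i))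
          * (\<Prod>i<n-k. 1 + y / of_nat (Suc (k+i)))"
proof -
  obtain k' where k: "k = Suc k'" using assms by (cases k) auto
  define M where "M = n - k"
  have n: "n = k + M" using assms unfolding M_def by simp
  define c where "c = y + of_nat k + of_nat n"
  have num: "(\<Prod>i<n. c - of_nat i) = ((y + of_nat (Suc n)) * (\<Prod>i<k'. y + of_nat (Suc n) + of_nat (Suc i)))
        * (\<Prod>i<M. y + of_nat (Suc (k + i)))"
  proof -
    have "(\<Prod>i<n. c - of_nat i) = (\<Prod>i<k. c - of_nat i) * (\<Prod>i<M. (c - of_nat k) - of_nat i)"
      unfolding n prod_split by (simp add: algebra_simps)
    also have "(\<Prod>i<k. c - of_nat i) = (\<Prod>i<Suc k'. (y + of_nat (Suc n)) + of_nat i)"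
      unfolding prod_rev by (simp add: c_def k algebra_simps)
    also have "\<dots> = (y + of_nat (Suc n)) * (\<Prod>i<k'. y + of_nat (Suc n) + of_nat (Suc i))"
      unfolding prod.lessThan_Suc_shift by simp
    also have "(\<Prod>i<M. (c - of_nat k) - of_nat i) = (\<Prod>i<M. y + of_nat (Suc (k + i)))"
      unfolding prod_rev by (simp add: c_def n algebra_simps)
    finally show ?thesis .
  qed
  have fn: "(fact n :: rat) = of_nat k * (\<Prod>i<k'. of_nat (Suc i)) * (\<Prod>i<M. of_nat (Suc (k + i)))"
    unfolding n fact_split by (simp add: k)
  have "c gchoose n = (\<Prod>i<n. c - of_nat i) / fact n"
    by (simp add: gbinomial_prod_rev atLeast0LessThan)
  also have "\<dots> = (y + of_nat (Suc n)) / of_nat k * ((\<Prod>i<k'. y + of_nat (Suc n) + of_nat (Suc i)) / (\<Prod>i<k'. of_nat (Suc i)))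
       * ((\<Prod>i<M. y + of_nat (Suc (k + i))) / (\<Prod>i<M. of_nat (Suc (k + i))))"
    unfolding num fn by simp
  also have "(\<Prod>i<k'. y + of_nat (Suc n) + of_nat (Suc i)) / (\<Prod>i<k'. of_nat (Suc i)) = (\<Prod>i<k'. 1 + (y + of_nat (Suc n)) / of_nat (Suc i))"
    unfolding prod_dividef[symmetric] by (rule prod.cong) (auto simp: field_simps)
  also have "(\<Prod>i<M. y + of_nat (Suc (k + i))) / (\<Prod>i<M. of_nat (Suc (k + i))) =
      (\<Prod>i<M. 1 + y / of_nat (Suc (k+i)))"
    unfolding prod_dividef[symmetric] by (rule prod.cong) (auto simp: field_simps)
  finally show ?thesis unfolding c_def M_def k by simp
qed

lemma gB:
  fixes y :: rat
  assumes "1 \<le> k" "k \<le> m"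
  shows "((y + of_nat k - 1) gchoose m) * ((-1)^m * ((y + of_nat k + of_nat m) gchoose m)) =
     y / of_nat k * (\<Prod>i<k-1. 1 + y / of_nat (Suc i)) * (\<Prod>i<m-k. 1 + y / of_nat (Suc (k+i)))
     * (\<Prod>i<m-k. 1 - y / of_nat (Suc i)) * (\<Prod>i<k. 1 - (y + of_nat (2*m+1)) / of_nat (m - i))"
proof -
  obtain k' where k: "k = Suc k'" using assms by (cases k) auto
  define M where "M = m - k"
  have m: "m = k + M" using assms unfolding M_def by simp
  define a where "a = y + of_nat k - 1"
  define c where "c = y + of_nat k + of_nat m"
  define A1 where "A1 = (\<Prod>i<k'. y + of_nat (Suc i))"
  define A2 where "A2 = (\<Prod>i<M. y + of_nat (Suc (k + i)))"
  define B1 where "B1 = (\<Prod>i<M. y - of_nat (Suc i))"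
  define B2 where "B2 = (\<Prod>i<k. y + of_nat (Suc m) + of_nat i)"
  define D1 where "D1 = (\<Prod>i<k'. of_nat (Suc i) :: rat)"
  define D2 where "D2 = (\<Prod>i<M. of_nat (Suc (k + i)) :: rat)"
  define E1 where "E1 = (\<Prod>i<M. of_nat (Suc i) :: rat)"
  define E2 where "E2 = (\<Prod>i<k. of_nat (m - i) :: rat)"
  have num1: "(\<Prod>i<m. a - of_nat i) = y * A1 * B1"
  proof -
    have "(\<Prod>i<m. a - of_nat i) = (\<Prod>i<k. a - of_nat i) * (\<Prod>i<M. (a - of_nat k) - of_nat i)"
      unfolding m prod_split by (simp add: algebra_simps)
    also have "(\<Prod>i<k. a - of_nat i) = (\<Prod>i<Suc k'. y + of_nat i)"
      unfolding prod_rev by (simp add: a_def k)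
    also have "\<dots> = y * A1"
      unfolding prod.lessThan_Suc_shift A1_def by simp
    also have "(\<Prod>i<M. (a - of_nat k) - of_nat i) = B1"
      unfolding B1_def by (rule prod.cong) (auto simp: a_def algebra_simps)
    finally show ?thesis by simp
  qed
  have num2: "(\<Prod>i<m. c - of_nat i) = B2 * A2"
  proof -
    have "(\<Prod>i<m. c - of_nat i) = (\<Prod>i<k. c - of_nat i) * (\<Prod>i<M. (c - of_nat k) - of_nat i)"
      unfolding m prod_split by (simp add: algebra_simps)
    also have "(\<Prod>i<k. c - of_nat i) = B2"
      unfolding prod_rev B2_def by (simp add: c_def algebra_simps)
    also have "(\<Prod>i<M. (c - of_nat k) - of_nat i) = A2"
      unfolding prod_rev A2_def by (simp add: c_def m algebra_simps)
    finally show ?thesis .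
  qed
  have f1: "(fact m :: rat) = of_nat k * D1 * D2"
    unfolding m fact_split D1_def D2_def by (simp add: k)
  have f2: "(fact m :: rat) = E1 * E2"
  proof -
    have "(fact m :: rat) = E1 * (\<Prod>i<k. of_nat (Suc (M + i)))"
      unfolding E1_def using fact_split[of M k] m by (simp add: add.commute)
    also have "(\<Prod>i<k. of_nat (Suc (M + i)) :: rat) = E2"
    proof -
      have "E2 = (\<Prod>i<k. of_nat m - of_nat i)" unfolding E2_def
        by (rule prod.cong) (use assms in \<open>auto simp: of_nat_diff\<close>)
      also have "\<dots> = (\<Prod>i<k. of_nat m - of_nat k + 1 + of_nat i)" by (rule prod_rev)
      also have "\<dots> = (\<Prod>i<k. of_nat (Suc (M + i)))"
        by (rule prod.cong) (auto simp: m)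
      finally show ?thesis by simp
    qed
    finally show ?thesis .
  qed
  have sgn: "((-1::rat)^m) = (\<Prod>i<M. -1) * (\<Prod>i<k. -1)"
    by (simp add: m power_add)
  have "((y + of_nat k - 1) gchoose m) * ((-1)^m * ((y + of_nat k + of_nat m) gchoose m))
     = (y * A1 * B1 / (of_nat k * D1 * D2)) * (((\<Prod>i<M. -1) * (\<Prod>i<k. -1)) * (B2 * A2 / (E1 * E2)))"
    unfolding sgn a_def[symmetric] c_def[symmetric]
    by (simp add: gbinomial_prod_rev atLeast0LessThan num1 num2 flip: f1 f2)
  also have "\<dots> = y / of_nat k * (A1 / D1) * (A2 / D2) * ((\<Prod>i<M. -1) * B1 / E1) * ((\<Prod>i<k. -1) * B2 / E2)"
    by (simp add: field_simps)
  also have "A1 / D1 = (\<Prod>i<k-1. 1 + y / of_nat (Suc i))"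
    unfolding A1_def D1_def prod_dividef[symmetric] k by (rule prod.cong) (auto simp: field_simps)
  also have "A2 / D2 = (\<Prod>i<m-k. 1 + y / of_nat (Suc (k+i)))"
    unfolding A2_def D2_def prod_dividef[symmetric] M_def by (rule prod.cong) (auto simp: field_simps)
  also have "(\<Prod>i<M. -1) * B1 / E1 = (\<Prod>i<m-k. 1 - y / of_nat (Suc i))"
    unfolding B1_def E1_def prod.distrib[symmetric] prod_dividef[symmetric] M_def
    by (rule prod.cong) (auto simp: field_simps)
  also have "(\<Prod>i<k. -1) * B2 / E2 = (\<Prod>i<k. 1 - (y + of_nat (2*m+1)) / of_nat (m - i))"
    unfolding B2_def E2_def prod.distrib[symmetric] prod_dividef[symmetric]
    by (rule prod.cong) (use assms in \<open>auto simp: field_simps of_nat_diff\<close>)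
  finally show ?thesis .
qed



lemma harm_lt: "harm n = (\<Sum>i<n. 1 / of_nat (Suc i))"
  unfolding harm_def using sum.atLeast1_atMost_eq[of "\<lambda>j. 1 / (of_nat j :: rat)" n] by simp

lemma harm_Suc: "harm (Suc n) = harm n + 1 / of_nat (Suc n)"
  by (simp add: harm_lt)

lemma sum_c_harm: "(\<Sum>i<j. c / of_nat (Suc i)) = c * harm j"
  by (simp add: harm_lt sum_distrib_left)

lemma sum_c_harm2: assumes "k \<le> n" shows "(\<Sum>i<n-k. c / of_nat (Suc (k+i))) = c * (harm n - harm k)"
proof -
  have "harm n = harm k + (\<Sum>i<n-k. 1 / of_nat (Suc (k+i)))"
    using sum_split[of "\<lambda>i. 1 / (of_nat (Suc i) :: rat)" k "n-k"] assms by (simp add: harm_lt)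
  thus ?thesis by (simp add: sum_distrib_left)
qed

lemma Rp_divn: assumes "prime p" "x \<in> Rp (int p)" "0 < b" "b < p" shows "x / of_nat b \<in> Rp (int p)"
proof -
  have "\<not> int p dvd int b" using assms by (simp add: nat_dvd_not_less)
  thus ?thesis using Rp_div[OF _ assms(2), of "int b"] assms by simp
qed

lemma harm_p: assumes "prime p" "p > 2" shows "\<exists>w\<in>Rp (int p). harm (p-1) = of_nat p * w"
proof -
  have pp: "prime (int p)" using assms by simp
  define S where "S = (\<Sum>i<p-1. 1 / (of_nat (Suc i) :: rat))"
  have S2: "S = (\<Sum>i<p-1. 1 / of_nat (p - 1 - i))"
    unfolding S_def by (subst sum.nat_diff_reindex[symmetric]) (rule sum.cong, auto simp: Suc_diff_Suc)
  have "2 * S = (\<Sum>i<p-1. 1 / of_nat (Suc i) + 1 / of_nat (p - 1 - i))"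
    using S_def S2 by (simp add: sum.distrib)
  also have "\<dots> = (\<Sum>i<p-1. of_nat p * (1 / of_nat (Suc i) / of_nat (p - 1 - i)))"
    by (rule sum.cong) (use assms in \<open>auto simp: field_simps of_nat_diff\<close>)
  also have "\<dots> = of_nat p * (\<Sum>i<p-1. 1 / of_nat (Suc i) / of_nat (p - 1 - i))"
    by (simp add: sum_distrib_left)
  finally have "S = of_nat p * ((1/2) * (\<Sum>i<p-1. 1 / of_nat (Suc i) / of_nat (p - 1 - i)))"
    by simp
  moreover have "(1/2) * (\<Sum>i<p-1. 1 / of_nat (Suc i) / of_nat (p - 1 - i)) \<in> Rp (int p)"
  proof (rule Rp_mult[OF pp])
    have "\<not> int p dvd 2" using assms by (auto dest: zdvd_imp_le)
    thus "1/2 \<in> Rp (int p)" using Rp_inv[of "int p" 2] by simp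
    show "(\<Sum>i<p-1. 1 / of_nat (Suc i) / of_nat (p - 1 - i)) \<in> Rp (int p)"
      by (rule Rp_sum[OF pp], rule Rp_divn[OF assms(1)], rule Rp_divn[OF assms(1)])
        (use assms Rp_1[OF pp] in auto)
  qed
  ultimately show ?thesis unfolding S_def harm_lt by blast
qed

lemma harm_odd: "2 * harm (2*k) - harm k = (\<Sum>i<k. 2 / of_nat (2*i+1))"
proof (induction k)
  case 0 thus ?case by (simp add: harm_def)
next
  case (Suc k)
  have h: "harm (2 * Suc k) = harm (2*k) + 1 / of_nat (2*k+1) + 1 / of_nat (2*k+2)"
    by (simp add: harm_Suc)
  have h2: "harm (Suc k) = harm k + 1 / of_nat (Suc k)" by (rule harm_Suc)
  have s: "(\<Sum>i<Suc k. 2 / of_nat (2*i+1)) = (\<Sum>i<k. 2 / of_nat (2*i+1)) + 2 / (of_nat (2*k+1) :: rat)" by simp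
  have e: "2 * (1 / of_nat (2*k+2)) = 1 / (of_nat (Suc k) :: rat)" by (simp add: field_simps)
  have e2: "2 / of_nat (2*k+1) = 2 * (1 / (of_nat (2*k+1) :: rat))" by simp
  show ?case using Suc.IH h h2 s e e2 by linarith
qed

lemma sum_rev_m: assumes "k \<le> m" shows "(\<Sum>i<k. 1 / of_nat (m - i)) = harm m - harm (m - k)"
proof -
  have "(\<Sum>i<k. 1 / (of_nat (m - i) :: rat)) = (\<Sum>i<k. (\<lambda>j. 1 / of_nat (Suc (m - k + j))) (k - Suc i))"
    by (rule sum.cong) (use assms in auto)
  also have "\<dots> = (\<Sum>i<k. 1 / of_nat (Suc (m - k + i)))" by (rule sum.nat_diff_reindex)
  also have "\<dots> = harm m - harm (m-k)" using sum_c_harm2[of "m-k" m 1] assms by simp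
  finally show ?thesis .
qed

lemma sum_odd_m: assumes "prime p" "p = 2*m+1" "k \<le> m"
  shows "\<exists>w\<in>Rp (int p). (\<Sum>i<k. 1 / of_nat (m - i)) + (\<Sum>i<k. 2 / of_nat (2*i+1)) = of_nat p * w"
proof -
  have pp: "prime (int p)" using assms(1) by simp
  have "(\<Sum>i<k. 1 / of_nat (m - i)) + (\<Sum>i<k. 2 / of_nat (2*i+1)) = (\<Sum>i<k::nat. (of_nat p :: rat) * (1 / of_nat (m - i) / of_nat (2*i+1)))"
    unfolding sum.distrib[symmetric]
    by (rule sum.cong) (use assms in \<open>auto simp: field_simps of_nat_diff\<close>)
  also have "\<dots> = of_nat p * (\<Sum>i<k. 1 / of_nat (m - i) / of_nat (2*i+1))" by (simp add: sum_distrib_left)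
  finally show ?thesis
    by (intro bexI[of _ "\<Sum>i<k. 1 / of_nat (m - i) / of_nat (2*i+1)"] Rp_sum[OF pp]
        Rp_divn[OF assms(1)]) (use assms Rp_1[OF pp] in auto)
qed

lemma mult_form: assumes "prime p" "a \<in> Rp p" "b \<in> Rp p" "r \<in> Rp p" "s \<in> Rp p"
  shows "\<exists>\<rho>\<in>Rp p. (1 + of_int p * a + of_int p ^ 2 * r) * (1 + of_int p * b + of_int p ^ 2 * s)
     = 1 + of_int p * (a + b) + of_int p ^ 2 * \<rho>"
proof -
  let ?\<rho> = "a*b + r + s + of_int p * (a*s + r*b) + of_int (p ^ 2) * (r * s)"
  have "?\<rho> \<in> Rp p" using assms by (intro Rp_add Rp_mult Rp_int) auto
  moreover have "(1 + of_int p * a + of_int p ^ 2 * r) * (1 + of_int p * b + of_int p ^ 2 * s)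
     = 1 + of_int p * (a + b) + of_int p ^ 2 * ?\<rho>"
    by (simp add: algebra_simps power2_eq_square of_int_power)
  ultimately show ?thesis by blast
qed



lemma mainA:
  fixes X :: rat
  assumes "prime p" "p > 3" "1 \<le> k" "k \<le> p - 1" "X \<in> Rp (int p)"
  shows "qcong (int p) 4 (((of_nat p * X + of_nat k - 1) gchoose (p - 1)) * ((- of_nat p * X - of_nat k - 1) gchoose (p - 1)))
     (of_nat p ^ 2 * X * (X + 1) / of_nat k ^ 2 * (1 + 2 * of_nat p * harm k - of_nat p / of_nat k - 2 * of_nat p * X / of_nat k))"
proof -
  have pp: "prime (int p)" using assms(1) by simp
  define n where "n = p - 1"
  have pn: "p = Suc n" using assms unfolding n_def by simp
  have ev: "even n" using prime_odd_nat[OF assms(1)] assms(2) pn by simp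
  have kn: "1 \<le> k" "k \<le> n" using assms n_def by auto
  have kp: "0 < k" "k < p" using assms by auto
  define P where "P = (of_nat p :: rat)"
  have Pi: "of_int (int p) = P" unfolding P_def by simp
  have neg: "(- of_nat p * X - of_nat k - 1) gchoose n = (of_nat p * X + of_nat k + of_nat n) gchoose n"
    using gbinomial_negated_upper[of "- of_nat p * X - of_nat k - 1" n] ev by (simp add: algebra_simps)
  define a1 where "a1 = (\<lambda>i. X / of_nat (Suc i))"
  define a2 where "a2 = (\<lambda>i. (X - 1) / of_nat (Suc (k + i)))"
  define a3 where "a3 = (\<lambda>i. (X + 1) / of_nat (Suc i))"
  define a4 where "a4 = (\<lambda>i. X / of_nat (Suc (k + i)))"
  have e1: "(of_nat p * X + of_nat k - 1) gchoose n = P * X / of_nat k * (\<Prod>i<k-1. 1 + P * a1 i) * (\<Prod>i<n-k. 1 + P * a2 i)"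
    unfolding gA1[OF kn] a1_def a2_def P_def pn by (simp add: field_simps)
  have e2: "(of_nat p * X + of_nat k + of_nat n) gchoose n = P * (X + 1) / of_nat k * (\<Prod>i<k-1. 1 + P * a3 i) * (\<Prod>i<n-k. 1 + P * a4 i)"
    unfolding gA2[OF kn] a3_def a4_def P_def pn by (simp add: field_simps)
  have R1: "a1 i \<in> Rp (int p)" if "i < k - 1" for i
    unfolding a1_def using that assms by (intro Rp_divn) auto
  have R2: "a2 i \<in> Rp (int p)" if "i < n - k" for i
    unfolding a2_def using that assms pp pn by (intro Rp_divn Rp_diff Rp_1) auto
  have R3: "a3 i \<in> Rp (int p)" if "i < k - 1" for i
    unfolding a3_def using that assms pp by (intro Rp_divn Rp_add Rp_1) auto
  have R4: "a4 i \<in> Rp (int p)" if "i < n - k" for i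
    unfolding a4_def using that assms pn by (intro Rp_divn) auto
  obtain r1 where r1: "r1 \<in> Rp (int p)" "(\<Prod>i<k-1. 1 + P * a1 i) = 1 + P * sum a1 {..<k-1} + P^2 * r1"
    using prod_one_plus[OF pp, of "{..<k-1}" a1] R1 unfolding Pi by auto
  obtain r2 where r2: "r2 \<in> Rp (int p)" "(\<Prod>i<n-k. 1 + P * a2 i) = 1 + P * sum a2 {..<n-k} + P^2 * r2"
    using prod_one_plus[OF pp, of "{..<n-k}" a2] R2 unfolding Pi by auto
  obtain r3 where r3: "r3 \<in> Rp (int p)" "(\<Prod>i<k-1. 1 + P * a3 i) = 1 + P * sum a3 {..<k-1} + P^2 * r3"
    using prod_one_plus[OF pp, of "{..<k-1}" a3] R3 unfolding Pi by auto
  obtain r4 where r4: "r4 \<in> Rp (int p)" "(\<Prod>i<n-k. 1 + P * a4 i) = 1 + P * sum a4 {..<n-k} + P^2 * r4"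
    using prod_one_plus[OF pp, of "{..<n-k}" a4] R4 unfolding Pi by auto
  have S1: "sum a1 {..<k-1} \<in> Rp (int p)" "sum a2 {..<n-k} \<in> Rp (int p)"
     "sum a3 {..<k-1} \<in> Rp (int p)" "sum a4 {..<n-k} \<in> Rp (int p)"
    using R1 R2 R3 R4 by (auto intro!: Rp_sum[OF pp])
  obtain \<rho>1 where \<rho>1: "\<rho>1 \<in> Rp (int p)" "(1 + P * sum a1 {..<k-1} + P^2 * r1) * (1 + P * sum a2 {..<n-k} + P^2 * r2)
      = 1 + P * (sum a1 {..<k-1} + sum a2 {..<n-k}) + P^2 * \<rho>1"
    using mult_form[OF pp S1(1,2) r1(1) r2(1)] unfolding Pi by auto
  obtain \<rho>2 where \<rho>2: "\<rho>2 \<in> Rp (int p)" "(1 + P * sum a3 {..<k-1} + P^2 * r3) * (1 + P * sum a4 {..<n-k} + P^2 * r4)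
      = 1 + P * (sum a3 {..<k-1} + sum a4 {..<n-k}) + P^2 * \<rho>2"
    using mult_form[OF pp S1(3,4) r3(1) r4(1)] unfolding Pi by auto
  obtain \<rho> where \<rho>: "\<rho> \<in> Rp (int p)" "(1 + P * (sum a1 {..<k-1} + sum a2 {..<n-k}) + P^2 * \<rho>1) *
      (1 + P * (sum a3 {..<k-1} + sum a4 {..<n-k}) + P^2 * \<rho>2)
      = 1 + P * ((sum a1 {..<k-1} + sum a2 {..<n-k}) + (sum a3 {..<k-1} + sum a4 {..<n-k})) + P^2 * \<rho>"
    using mult_form[OF pp Rp_add[OF pp S1(1,2)] Rp_add[OF pp S1(3,4)] \<rho>1(1) \<rho>2(1)] unfolding Pi by auto
  define S where "S = (sum a1 {..<k-1} + sum a2 {..<n-k}) + (sum a3 {..<k-1} + sum a4 {..<n-k})"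
  obtain w where w: "w \<in> Rp (int p)" "harm n = P * w"
    using harm_p[OF assms(1)] assms(2) unfolding n_def P_def by auto
  have hk: "harm (k-1) = harm k - 1 / of_nat k"
    using harm_Suc[of "k-1"] kn by simp
  have S_eq: "S = 2 * harm k - (2 * X + 1) / of_nat k + (2 * X - 1) * P * w"
  proof -
    have "S = X * harm (k-1) + (X - 1) * (harm n - harm k) + (X + 1) * harm (k-1) + X * (harm n - harm k)"
      unfolding S_def a1_def a2_def a3_def a4_def sum_c_harm sum_c_harm2[OF kn(2)] by simp
    also have "\<dots> = 2 * harm k - (2 * X + 1) * (1 / of_nat k) + (2 * X - 1) * P * w"
      unfolding hk w(2) by (simp add: algebra_simps add_divide_distrib)
    finally show ?thesis by simp
  qed
  define L where "L = ((of_nat p * X + of_nat k - 1) gchoose (p - 1)) * ((- of_nat p * X - of_nat k - 1) gchoose (p - 1))"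
  have L_eq: "L = P * X / of_nat k * (P * (X + 1) / of_nat k) * (1 + P * S + P^2 * \<rho>)"
  proof -
    have "L = P * X / of_nat k * (P * (X + 1) / of_nat k) * (((\<Prod>i<k-1. 1 + P * a1 i) * (\<Prod>i<n-k. 1 + P * a2 i))
       * ((\<Prod>i<k-1. 1 + P * a3 i) * (\<Prod>i<n-k. 1 + P * a4 i)))"
      unfolding L_def n_def[symmetric] neg e1 e2 by (simp add: field_simps)
    thus ?thesis unfolding r1(2) r2(2) r3(2) r4(2) \<rho>1(2) \<rho>2(2) \<rho>(2) S_def .
  qed
  define r where "r = X * (X + 1) / of_nat k / of_nat k * ((2 * X - 1) * w + \<rho>)"
  have rR: "r \<in> Rp (int p)" unfolding r_def using assms pp w(1) \<rho>(1) kp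
    by (intro Rp_divn Rp_mult Rp_add Rp_diff Rp_1 Rp_numeral) auto
  have "L - (of_nat p ^ 2 * X * (X + 1) / of_nat k ^ 2 * (1 + 2 * of_nat p * harm k - of_nat p / of_nat k - 2 * of_nat p * X / of_nat k))
     = of_int (int p) ^ 4 * r"
    unfolding L_eq S_eq Pi r_def P_def[symmetric] using kp by (simp add: field_simps power2_eq_square power4_eq_xxxx)
  thus ?thesis unfolding qcong_Rp L_def using rR by blast
qed

lemma mainB:
  fixes X :: rat
  assumes "prime p" "p > 3" "1 \<le> k" "k \<le> (p - 1) div 2" "X \<in> Rp (int p)"
  shows "qcong (int p) 3 (((of_nat p * X + of_nat k - 1) gchoose ((p - 1) div 2)) * ((- of_nat p * X - of_nat k - 1) gchoose ((p - 1) div 2)))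
     (of_nat p * X / of_nat k * (1 - of_nat p * X / of_nat k + 2 * of_nat p * harm (2 * k) - of_nat p * harm k))"
proof -
  have pp: "prime (int p)" using assms(1) by simp
  define m where "m = (p - 1) div 2"
  have od: "odd p" using prime_odd_nat[OF assms(1)] assms(2) by simp
  have pm: "p = 2 * m + 1" using od unfolding m_def by presburger
  have km: "1 \<le> k" "k \<le> m" using assms m_def by auto
  have kp: "0 < k" "k < p" using km pm by auto
  define P where "P = (of_nat p :: rat)"
  have Pi: "of_int (int p) = P" unfolding P_def by simp
  have neg: "(- of_nat p * X - of_nat k - 1) gchoose m = (-1)^m * ((of_nat p * X + of_nat k + of_nat m) gchoose m)"
    using gbinomial_negated_upper[of "- of_nat p * X - of_nat k - 1" m] by (simp add: algebra_simps)
  define a1 where "a1 = (\<lambda>i. X / of_nat (Suc i))"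
  define a2 where "a2 = (\<lambda>i. X / of_nat (Suc (k + i)))"
  define a3 where "a3 = (\<lambda>i. (- X) / of_nat (Suc i))"
  define a4 where "a4 = (\<lambda>i. (- (X + 1)) * (1 / of_nat (m - i)))"
  have e: "((of_nat p * X + of_nat k - 1) gchoose m) * ((- of_nat p * X - of_nat k - 1) gchoose m) =
     P * X / of_nat k * ((\<Prod>i<k-1. 1 + P * a1 i) * (\<Prod>i<m-k. 1 + P * a2 i))
       * ((\<Prod>i<m-k. 1 + P * a3 i) * (\<Prod>i<k. 1 + P * a4 i))"
  proof -
    have "((of_nat p * X + of_nat k - 1) gchoose m) * ((- of_nat p * X - of_nat k - 1) gchoose m) =
     of_nat p * X / of_nat k * (\<Prod>i<k-1. 1 + of_nat p * X / of_nat (Suc i)) * (\<Prod>i<m-k. 1 + of_nat p * X / of_nat (Suc (k+i)))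
     * (\<Prod>i<m-k. 1 - of_nat p * X / of_nat (Suc i)) * (\<Prod>i<k. 1 - (of_nat p * X + of_nat (2*m+1)) / of_nat (m - i))"
      unfolding neg by (rule gB[OF km])
    also have "(\<Prod>i<k. 1 - (of_nat p * X + of_nat (2*m+1)) / of_nat (m - i)) = (\<Prod>i<k. 1 + P * a4 i)"
      unfolding a4_def P_def pm by (rule prod.cong) (use km in \<open>auto simp: field_simps\<close>)
    finally show ?thesis unfolding a1_def a2_def a3_def P_def by (simp add: field_simps)
  qed
  have R1: "a1 i \<in> Rp (int p)" if "i < k - 1" for i
    unfolding a1_def using that assms kp by (intro Rp_divn) auto
  have R2: "a2 i \<in> Rp (int p)" if "i < m - k" for i
    unfolding a2_def using that assms pm by (intro Rp_divn) auto
  have R3: "a3 i \<in> Rp (int p)" if "i < m - k" for i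
    unfolding a3_def using that assms pm by (intro Rp_divn Rp_uminus) auto
  have R4: "a4 i \<in> Rp (int p)" if "i < k" for i
    unfolding a4_def using that assms pm km pp by (intro Rp_divn Rp_uminus Rp_mult Rp_add Rp_1) auto
  obtain r1 where r1: "r1 \<in> Rp (int p)" "(\<Prod>i<k-1. 1 + P * a1 i) = 1 + P * sum a1 {..<k-1} + P^2 * r1"
    using prod_one_plus[OF pp, of "{..<k-1}" a1] R1 unfolding Pi by auto
  obtain r2 where r2: "r2 \<in> Rp (int p)" "(\<Prod>i<m-k. 1 + P * a2 i) = 1 + P * sum a2 {..<m-k} + P^2 * r2"
    using prod_one_plus[OF pp, of "{..<m-k}" a2] R2 unfolding Pi by auto
  obtain r3 where r3: "r3 \<in> Rp (int p)" "(\<Prod>i<m-k. 1 + P * a3 i) = 1 + P * sum a3 {..<m-k} + P^2 * r3"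
    using prod_one_plus[OF pp, of "{..<m-k}" a3] R3 unfolding Pi by auto
  obtain r4 where r4: "r4 \<in> Rp (int p)" "(\<Prod>i<k. 1 + P * a4 i) = 1 + P * sum a4 {..<k} + P^2 * r4"
    using prod_one_plus[OF pp, of "{..<k}" a4] R4 unfolding Pi by auto
  have S1: "sum a1 {..<k-1} \<in> Rp (int p)" "sum a2 {..<m-k} \<in> Rp (int p)"
     "sum a3 {..<m-k} \<in> Rp (int p)" "sum a4 {..<k} \<in> Rp (int p)"
    using R1 R2 R3 R4 by (auto intro!: Rp_sum[OF pp])
  obtain \<rho>1 where \<rho>1: "\<rho>1 \<in> Rp (int p)" "(1 + P * sum a1 {..<k-1} + P^2 * r1) * (1 + P * sum a2 {..<m-k} + P^2 * r2)
      = 1 + P * (sum a1 {..<k-1} + sum a2 {..<m-k}) + P^2 * \<rho>1"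
    using mult_form[OF pp S1(1,2) r1(1) r2(1)] unfolding Pi by auto
  obtain \<rho>2 where \<rho>2: "\<rho>2 \<in> Rp (int p)" "(1 + P * sum a3 {..<m-k} + P^2 * r3) * (1 + P * sum a4 {..<k} + P^2 * r4)
      = 1 + P * (sum a3 {..<m-k} + sum a4 {..<k}) + P^2 * \<rho>2"
    using mult_form[OF pp S1(3,4) r3(1) r4(1)] unfolding Pi by auto
  obtain \<rho> where \<rho>: "\<rho> \<in> Rp (int p)" "(1 + P * (sum a1 {..<k-1} + sum a2 {..<m-k}) + P^2 * \<rho>1) *
      (1 + P * (sum a3 {..<m-k} + sum a4 {..<k}) + P^2 * \<rho>2)
      = 1 + P * ((sum a1 {..<k-1} + sum a2 {..<m-k}) + (sum a3 {..<m-k} + sum a4 {..<k})) + P^2 * \<rho>"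
    using mult_form[OF pp Rp_add[OF pp S1(1,2)] Rp_add[OF pp S1(3,4)] \<rho>1(1) \<rho>2(1)] unfolding Pi by auto
  define S where "S = (sum a1 {..<k-1} + sum a2 {..<m-k}) + (sum a3 {..<m-k} + sum a4 {..<k})"
  define V where "V = (\<Sum>i<k. 1 / (of_nat (m - i) :: rat))"
  obtain w where w: "w \<in> Rp (int p)" "V + (2 * harm (2*k) - harm k) = P * w"
    using sum_odd_m[OF assms(1) pm km(2)] unfolding V_def P_def harm_odd by auto
  have hk: "harm (k-1) = harm k - 1 / of_nat k"
    using harm_Suc[of "k-1"] km by simp
  have S_eq: "S = - X * (1 / of_nat k) - V"
  proof -
    have "S = X * harm (k-1) + X * (harm m - harm k) + (- X) * harm (m - k) + (- (X + 1)) * (harm m - harm (m - k))"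
      unfolding S_def a1_def a2_def a3_def a4_def sum_c_harm sum_c_harm2[OF km(2)]
        sum_distrib_left[symmetric] sum_rev_m[OF km(2)] by simp
    also have "\<dots> = - X * (1 / of_nat k) - (harm m - harm (m - k))"
      unfolding hk by (simp add: algebra_simps)
    finally show ?thesis unfolding V_def sum_rev_m[OF km(2)] .
  qed
  define L where "L = ((of_nat p * X + of_nat k - 1) gchoose ((p - 1) div 2)) * ((- of_nat p * X - of_nat k - 1) gchoose ((p - 1) div 2))"
  have L_eq: "L = P * X / of_nat k * (1 + P * S + P^2 * \<rho>)"
    unfolding L_def m_def[symmetric] e r1(2) r2(2) r3(2) r4(2) \<rho>1(2) \<rho>2(2) S_def \<rho>(2)[symmetric] by simp
  have V_eq: "V = P * w - (2 * harm (2*k) - harm k)" using w(2) by (simp add: algebra_simps)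
  define r where "r = X / of_nat k * (\<rho> - w)"
  have rR: "r \<in> Rp (int p)" unfolding r_def using assms pp w(1) \<rho>(1) kp
    by (intro Rp_divn Rp_mult Rp_diff) auto
  have "L - (of_nat p * X / of_nat k * (1 - of_nat p * X / of_nat k + 2 * of_nat p * harm (2 * k) - of_nat p * harm k))
     = of_int (int p) ^ 3 * r"
    unfolding L_eq S_eq V_eq Pi r_def P_def[symmetric] using kp by (simp add: field_simps power3_eq_cube power2_eq_square)
  thus ?thesis unfolding qcong_Rp L_def using rR by blast
qed

theorem lemma2p2:
  fixes p :: nat and t :: "nat \<Rightarrow> int"
  assumes "prime p" and "p > 3" and "t \<in> Zp (int p)"
  shows "(\<forall>k::nat. 1 \<le> k \<and> k \<le> p - 1 \<longrightarrow>
           padic_cong (int p) 4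
             (\<lambda>x. ((of_nat p * x + of_nat k - 1) gchoose (p - 1)) *
                  ((- of_nat p * x - of_nat k - 1) gchoose (p - 1)))
             (\<lambda>x. of_nat p ^ 2 * x * (x + 1) / of_nat k ^ 2 *
                  (1 + 2 * of_nat p * harm k - of_nat p / of_nat k - 2 * of_nat p * x / of_nat k))
             t)
       \<and> (\<forall>k::nat. 1 \<le> k \<and> k \<le> (p - 1) div 2 \<longrightarrow>
           padic_cong (int p) 3
             (\<lambda>x. ((of_nat p * x + of_nat k - 1) gchoose ((p - 1) div 2)) *
                  ((- of_nat p * x - of_nat k - 1) gchoose ((p - 1) div 2)))
             (\<lambda>x. of_nat p * x / of_nat k *
                  (1 - of_nat p * x / of_nat k + 2 * of_nat p * harm (2 * k) - of_nat p * harm k))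
             t)"
  proof -
  have pp: "prime (int p)" using assms(1) by simp
  have X: "\<And>x. (of_int x :: rat) \<in> Rp (int p)" using Rp_int[OF pp] by blast
  show ?thesis
    unfolding padic_cong_def using mainA[OF assms(1,2) _ _ X] mainB[OF assms(1,2) _ _ X] by auto
qed

end
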